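(* Let $n,p\in\mathbb{N}$, $0\le\lambda\le1$. Let $f$ be analytic in $\mathrm{U}=\{|z|<1\}$ of the form $f(z)=z^p+\sum_{k=p+n}^\infty a_kz^k$, put $\mathcal{F}_\lambda(z)=(1-\lambda)f(z)+\lambda zf'(z)$, and assume $\mathcal{F}_\lambda(z)\mathcal{F}_\lambda'(z)\neq0$ for all $z\in\mathrm{U}\setminus\{0\}$. Let $M\ge 1/p$. If $$\operatorname{Re}\left[\frac{z\mathcal{F}_\lambda'(z)}{\mathcal{F}_\lambda(z)}-1-\frac{z\mathcal{F}_\lambda''(z)}{\mathcal{F}_\lambda'(z)}\right]<\frac{nMp}{Mp+1},\quad z\in\mathrm{U},$$ then $$\left|\frac{\mathcal{F}_\lambda(z)}{z\mathcal{F}_\lambda'(z)}-\frac1p\right|<M,\quad z\in\mathrm{U}.$$ *)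

theory Defs
  imports "HOL-Complex_Analysis.Complex_Analysis"
begin

definition Flam :: "real \<Rightarrow> (complex \<Rightarrow> complex) \<Rightarrow> complex \<Rightarrow> complex" where
  "Flam lam f = (\<lambda>z. (1 - of_real lam) * f z + of_real lam * z * deriv f z)"

end

theory Submission
  imports Defs
begin

lemma bdry_max:
  fixes Q :: "complex \<Rightarrow> complex"
  assumes hol: "Q holomorphic_on S" and S: "open S" and sub: "cball 0 r \<subseteq> S"
    and z0: "norm z0 = r" and Qz0: "Q z0 \<noteq> 0"
    and mx: "\<And>z. z \<in> cball 0 r \<Longrightarrow> norm (Q z) \<le> norm (Q z0)"
  shows "Im (z0 * deriv Q z0 / Q z0) = 0 \<and> Re (z0 * deriv Q z0 / Q z0) \<ge> 0"
proof (rule ccontr)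
  define A where "A = z0 * deriv Q z0 / Q z0"
  assume "\<not> ?thesis"
  hence nA: "\<not> (Im A = 0 \<and> Re A \<ge> 0)" unfolding A_def .
  have lt: "Re A < cmod A"
  proof -
    have "Re A \<le> cmod A" by (rule complex_Re_le_cmod)
    moreover have "Re A \<noteq> cmod A"
    proof
      assume e: "Re A = cmod A"
      hence "Re A \<ge> 0" by simp
      moreover have "(Re A)^2 = (Re A)^2 + (Im A)^2" using e cmod_power2[of A]
        by simp
      hence "Im A = 0" by simp
      ultimately show False using nA by simp
    qed
    ultimately show ?thesis by simp
  qed
  define d where "d = cnj A - of_real (cmod A)"
  have Red: "Re d < 0" using lt by (simp add: d_def)
  have ReAd: "Re (A * d) > 0"
  proof -
    have "Re (A * d) = cmod A ^ 2 - cmod A * Re A"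
      by (simp add: d_def cmod_def power2_eq_square algebra_simps)
    also have "\<dots> = cmod A * (cmod A - Re A)" by (simp add: power2_eq_square algebra_simps)
    also have "\<dots> > 0" proof (intro mult_pos_pos)
      show "cmod A > 0" using lt by (cases "A = 0") auto
    qed (use lt in simp)
    finally show ?thesis .
  qed
  have d0: "d \<noteq> 0" using Red by auto
  have r0: "r > 0"
  proof -
    have "z0 \<noteq> 0" using nA by (auto simp: A_def)
    thus ?thesis using z0 by auto
  qed
  have z0S: "z0 \<in> S" using sub z0 by auto
  define c where "c = z0 * d"
  have der: "(Q has_field_derivative deriv Q z0) (at z0)"
    using hol S z0S by (simp add: holomorphic_derivI)
  have derh: "((\<lambda>s. Q (z0 + s * c)) has_field_derivative deriv Q z0 * c) (at 0)"
  proof -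
    have "((\<lambda>s. z0 + s * c) has_field_derivative c) (at 0)"
      by (auto intro!: derivative_eq_intros)
    from DERIV_chain2[OF _ this, of Q "deriv Q z0"] der show ?thesis by simp
  qed
  hence lim1: "((\<lambda>s. (Q (z0 + s * c) - Q z0) / s) \<longlongrightarrow> deriv Q z0 * c) (at 0)"
    by (simp add: has_field_derivative_iff)
  have ofr: "filterlim (\<lambda>s::real. complex_of_real s) (at 0) (at_right 0)"
  proof (rule filterlim_atI)
    show "((\<lambda>s::real. complex_of_real s) \<longlongrightarrow> 0) (at_right 0)"
      by (auto intro!: tendsto_eq_intros)
    show "\<forall>\<^sub>F x in at_right 0. complex_of_real x \<noteq> 0"
      using eventually_at_right_less[of "0::real"] by (rule eventually_mono) auto
  qed
  have lim2: "((\<lambda>s::real. (Q (z0 + of_real s * c) - Q z0) / of_real s) \<longlongrightarrow> deriv Q z0 * c) (at_right 0)"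
    using filterlim_compose[OF lim1 ofr] by simp
  have lim3: "((\<lambda>s::real. Re ((Q (z0 + of_real s * c) - Q z0) / of_real s / Q z0)) \<longlongrightarrow> Re (A * d)) (at_right 0)"
  proof -
    have "deriv Q z0 * c / Q z0 = A * d" by (simp add: A_def c_def)
    thus ?thesis using tendsto_Re[OF tendsto_divide[OF lim2 tendsto_const[of "Q z0"] Qz0]] by simp
  qed
  have ev1: "\<forall>\<^sub>F s in at_right 0. Re ((Q (z0 + of_real s * c) - Q z0) / of_real s / Q z0) > 0"
    using order_tendstoD(1)[OF lim3 ReAd] .
  define b where "b = - 2 * Re d / (cmod d)^2"
  have b: "b > 0" using Red d0 by (simp add: b_def divide_neg_pos)
  have ev2: "\<forall>\<^sub>F s in at_right 0. s < b"
    using b unfolding eventually_at_right[OF b] by auto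
  have ev3: "\<forall>\<^sub>F s in at_right (0::real). s > 0"
    by (rule eventually_at_right_less)
  obtain s where s1: "Re ((Q (z0 + of_real s * c) - Q z0) / of_real s / Q z0) > 0"
    and s2: "s < b" and s3: "s > 0"
    using eventually_happens[OF eventually_conj[OF ev1 eventually_conj[OF ev2 ev3]]] by auto
  have "cmod (1 + of_real s * d) \<le> 1"
  proof -
    have "(cmod (1 + of_real s * d))^2 = 1 + 2 * s * Re d + s^2 * (cmod d)^2"
      unfolding cmod_power2 by (simp add: power2_eq_square algebra_simps)
    also have "\<dots> \<le> 1"
    proof -
      have "s * (cmod d)^2 \<le> b * (cmod d)^2" using s2 by (intro mult_right_mono) auto
      also have "\<dots> = - 2 * Re d" using d0 by (simp add: b_def)
      finally have "s * (s * (cmod d)^2) \<le> s * (- 2 * Re d)" using s3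
        by (intro mult_left_mono) auto
      thus ?thesis by (simp add: power2_eq_square algebra_simps)
    qed
    finally show ?thesis by (simp add: power_le_one_iff)
  qed
  hence "norm (z0 + of_real s * c) \<le> r"
  proof -
    have "z0 + of_real s * c = z0 * (1 + of_real s * d)" by (simp add: c_def algebra_simps)
    hence "norm (z0 + of_real s * c) = r * cmod (1 + of_real s * d)" by (simp add: norm_mult z0)
    thus ?thesis using \<open>cmod (1 + of_real s * d) \<le> 1\<close> r0
      by (metis mult.right_neutral mult_left_mono less_imp_le)
  qed
  hence le: "norm (Q (z0 + of_real s * c)) \<le> norm (Q z0)" by (intro mx) auto
  define u where "u = (Q (z0 + of_real s * c) - Q z0) / of_real s / Q z0"
  have "Q (z0 + of_real s * c) = Q z0 * (1 + of_real s * u)"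
    using s3 Qz0 by (simp add: u_def field_simps)
  hence "norm (Q (z0 + of_real s * c)) = norm (Q z0) * cmod (1 + of_real s * u)"
    by (simp add: norm_mult)
  moreover have "cmod (1 + of_real s * u) > 1"
  proof -
    have "Re u > 0" using s1 unfolding u_def .
    hence "Re (1 + of_real s * u) > 1" using s3 by simp
    thus ?thesis using complex_Re_le_cmod[of "1 + of_real s * u"] by linarith
  qed
  ultimately have "norm (Q (z0 + of_real s * c)) > norm (Q z0)" using Qz0 by simp
  thus False using le by simp
qed

lemma re_frac_bound:
  fixes u :: complex and \<rho> :: real
  assumes "cmod u = \<rho>" "\<rho> \<ge> 1" "u + 1 \<noteq> 0"
  shows "Re (u / (u + 1)) \<ge> \<rho> / (\<rho> + 1)"
proof -
  define x where "x = Re u"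
  define y where "y = Im u"
  have r2: "\<rho>^2 = x^2 + y^2" using assms(1) cmod_power2[of u] by (simp add: x_def y_def)
  have xle: "x \<le> \<rho>" using complex_Re_le_cmod[of u] assms(1) by (simp add: x_def)
  have den: "(cmod (u+1))^2 = \<rho>^2 + 2*x + 1"
    unfolding cmod_power2 using r2 by (simp add: x_def y_def power2_eq_square algebra_simps)
  have dpos: "(cmod (u+1))^2 > 0" using assms(3) by simp
  have "Re (u / (u + 1)) = (Re u * Re (u+1) + Im u * Im (u+1)) / (cmod (u+1))^2"
    by (simp add: Re_divide cmod_power2)
  also have "\<dots> = (\<rho>^2 + x) / (\<rho>^2 + 2*x + 1)"
    using r2 den by (simp add: x_def y_def power2_eq_square algebra_simps)
  finally have eq: "Re (u / (u + 1)) = (\<rho>^2 + x) / (\<rho>^2 + 2*x + 1)" .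
  have dp: "\<rho>^2 + 2*x + 1 > 0" using dpos den by simp
  have "\<rho> / (\<rho> + 1) \<le> (\<rho>^2 + x) / (\<rho>^2 + 2*x + 1)"
  proof -
    have "\<rho> * (\<rho>^2 + 2*x + 1) \<le> (\<rho>^2 + x) * (\<rho> + 1)"
    proof -
      have "0 \<le> (\<rho> - 1) * (\<rho> - x)" using assms(2) xle by simp
      thus ?thesis by (simp add: power2_eq_square algebra_simps)
    qed
    thus ?thesis using dp assms(2) by (simp add: divide_simps)
  qed
  thus ?thesis using eq by simp
qed

lemma feq_alg:
  "(1 - complex_of_real lam) * (z^(Suc p') + z^(Suc p'+n)*gz) + of_real lam * z * (of_nat (Suc p') * z^p' + of_nat (Suc p' + n) * z^(p'+n) * gz + z^(Suc p'+n) * dg)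
  = z^(Suc p') * (of_real (1 - lam + lam * real (Suc p')) + z^n * (of_real (1 - lam + lam * real (Suc p' + n)) * gz + of_real lam * z * dg))"
  by (simp add: power_add algebra_simps)

lemma frac_alg:
  assumes "(D::complex) \<noteq> 0" "p \<noteq> 0" "zp \<noteq> 0" "D = of_nat p * H + z ^ n * L"
  shows "zp * H / (zp * D) - 1 / of_nat p = z ^ n * (- L / (of_nat p * D))"
proof -
  have "zp * H / (zp * D) = H / D" using assms by simp
  also have "H / D - 1 / of_nat p = (H * of_nat p - 1 * D) / (D * of_nat p)"
    using assms(1,2) by (simp add: diff_frac_eq)
  also have "H * of_nat p - 1 * D = - (z ^ n * L)" using assms(4) by (simp add: algebra_simps)
  finally show ?thesis by (simp add: algebra_simps)
qed

lemma factor: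
  fixes n p :: nat and lam :: real and f :: "complex \<Rightarrow> complex" and a :: "nat \<Rightarrow> complex"
  assumes n: "n \<ge> 1" and p: "p \<ge> 1"
    and lam: "0 \<le> lam" "lam \<le> 1"
    and hol: "f holomorphic_on ball 0 1"
    and ser: "\<And>z. z \<in> ball 0 1 \<Longrightarrow>
               (\<lambda>k. a (k + p + n) * z ^ (k + p + n)) sums (f z - z ^ p)"
    and nz: "\<And>z. z \<in> ball 0 1 - {0} \<Longrightarrow>
               Flam lam f z * deriv (Flam lam f) z \<noteq> 0"
  shows "\<exists>Q. Q holomorphic_on ball 0 1 \<and> (\<forall>z\<in>ball 0 1 - {0}.
           Flam lam f z / (z * deriv (Flam lam f) z) - 1 / of_nat p = z ^ n * Q z)"
proof -
  define B where "B = ball (0::complex) 1"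
  have oB: "open B" by (simp add: B_def)
  define b where "b = (\<lambda>k. a (k + p + n))"
  define G where "G = Abs_fps b"
  define g where "g = eval_fps G"
  have cr: "fps_conv_radius G \<ge> 1"
    unfolding fps_conv_radius_def G_def fps_nth_Abs_fps
  proof (rule conv_radius_geI_ex')
    fix r :: real assume r: "0 < r" "ereal r < 1"
    hence r1: "r < 1" by simp
    have "of_real r \<in> ball (0::complex) 1" using r r1 by simp
    from sums_summable[OF ser[OF this]]
    have s: "summable (\<lambda>k. a (k + p + n) * of_real r ^ (k + p + n) * (1 / of_real r ^ (p + n)))"
      by (rule summable_mult2)
    have eq: "(\<lambda>k. a (k + p + n) * of_real r ^ (k + p + n) * (1 / of_real r ^ (p + n)))
        = (\<lambda>k. b k * (of_real r :: complex) ^ k)"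
      by (rule ext) (use r in \<open>simp add: b_def power_add field_simps\<close>)
    from s show "summable (\<lambda>k. b k * (of_real r :: complex) ^ k)" unfolding eq .
  qed
  have sub: "B \<subseteq> eball 0 (fps_conv_radius G)"
  proof
    fix z assume "z \<in> B"
    hence "ereal (norm z) < 1" by (simp add: B_def)
    hence "ereal (norm z) < fps_conv_radius G" using cr by (rule order_less_le_trans)
    thus "z \<in> eball 0 (fps_conv_radius G)" by simp
  qed
  have ghol: "g holomorphic_on B" unfolding g_def by (intro holomorphic_on_eval_fps sub)
  have feq: "f z = z ^ p + z ^ (p + n) * g z" if z: "z \<in> B" for z
  proof -
    have "ereal (norm z) < fps_conv_radius G" using sub z by auto
    hence "summable (\<lambda>k. b k * z ^ k)"
      using summable_in_conv_radius[of z "fps_nth G"] by (simp add: G_def fps_conv_radius_def)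
    hence "(\<lambda>k. b k * z ^ k) sums g z"
      by (simp add: g_def eval_fps_def G_def summable_sums)
    from sums_mult[OF this, of "z ^ (p + n)"]
    have "(\<lambda>k. a (k + p + n) * z ^ (k + p + n)) sums (z ^ (p + n) * g z)"
      by (simp add: b_def power_add algebra_simps)
    with ser[of z] z have "f z - z ^ p = z ^ (p + n) * g z"
      by (simp add: B_def sums_unique2)
    thus ?thesis by (simp add: algebra_simps)
  qed
  obtain p' where p': "p = Suc p'" using p by (cases p) auto
  obtain n' where n': "n = Suc n'" using n by (cases n) auto
  have pm: "p - 1 = p'" "p + n - 1 = p' + n" "n - 1 = n'"
    "p - Suc 0 = p'" "n + p - Suc 0 = n + p'" "p + n - Suc 0 = p' + n" "n - Suc 0 = n'" using p' n' by auto
  have g'hol: "deriv g holomorphic_on B" using ghol oB by (rule holomorphic_deriv)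
  have dfeq: "deriv f z = of_nat p * z ^ p' + of_nat (p + n) * z ^ (p' + n) * g z + z ^ (p + n) * deriv g z"
    if z: "z \<in> B" for z
  proof -
    have dg: "(g has_field_derivative deriv g z) (at z)"
      using ghol oB z by (simp add: holomorphic_derivI)
    have "((\<lambda>z. z ^ p + z ^ (p + n) * g z) has_field_derivative
        (of_nat p * z ^ p' + of_nat (p + n) * z ^ (p' + n) * g z + z ^ (p + n) * deriv g z)) (at z)"
      using dg by (auto intro!: derivative_eq_intros simp: pm algebra_simps)
    hence "(f has_field_derivative
        (of_nat p * z ^ p' + of_nat (p + n) * z ^ (p' + n) * g z + z ^ (p + n) * deriv g z)) (at z)"
      by (rule has_field_derivative_transform_within_open[OF _ oB z]) (simp add: feq)
    thus ?thesis by (rule DERIV_imp_deriv)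
  qed
  define c :: complex where "c = of_real (1 - lam + lam * real p)"
  define K where "K = (\<lambda>z. of_real (1 - lam + lam * real (p + n)) * g z + of_real lam * z * deriv g z)"
  define H where "H = (\<lambda>z. c + z ^ n * K z)"
  define F where "F = Flam lam f"
  have Khol: "K holomorphic_on B" unfolding K_def using ghol g'hol oB by (intro holomorphic_intros)
  have Hhol: "H holomorphic_on B" unfolding H_def using Khol oB by (intro holomorphic_intros)
  have K'hol: "deriv K holomorphic_on B" using Khol oB by (rule holomorphic_deriv)
  have Feq: "F z = z ^ p * H z" if z: "z \<in> B" for z
  proof -
    have "F z = (1 - of_real lam) * (z^p + z^(p+n)*g z) + of_real lam * z * (of_nat p * z^p' + of_nat (p+n) * z^(p'+n) * g z + z^(p+n) * deriv g z)"
      unfolding F_def Flam_def dfeq[OF z] feq[OF z] by (rule refl)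
    also have "\<dots> = z^p * H z" unfolding H_def K_def c_def p' by (rule feq_alg)
    finally show ?thesis .
  qed
  have dHeq: "deriv H z = of_nat n * z ^ n' * K z + z ^ n * deriv K z" if z: "z \<in> B" for z
  proof -
    have dK: "(K has_field_derivative deriv K z) (at z)"
      using Khol oB z by (simp add: holomorphic_derivI)
    have "(H has_field_derivative (of_nat n * z ^ n' * K z + z ^ n * deriv K z)) (at z)"
      unfolding H_def using dK by (auto intro!: derivative_eq_intros simp: pm algebra_simps)
    thus ?thesis by (rule DERIV_imp_deriv)
  qed
  define L where "L = (\<lambda>z. of_nat n * K z + z * deriv K z)"
  define D where "D = (\<lambda>z. of_nat p * H z + z ^ n * L z)"
  have dFeq: "z * deriv F z = z ^ p * D z" if z: "z \<in> B" for z
  proof -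
    have dH: "(H has_field_derivative deriv H z) (at z)"
      using Hhol oB z by (simp add: holomorphic_derivI)
    have "((\<lambda>z. z ^ p * H z) has_field_derivative (of_nat p * z ^ p' * H z + z ^ p * deriv H z)) (at z)"
      using dH by (auto intro!: derivative_eq_intros simp: pm algebra_simps)
    hence "(F has_field_derivative (of_nat p * z ^ p' * H z + z ^ p * deriv H z)) (at z)"
      by (rule has_field_derivative_transform_within_open[OF _ oB z]) (simp add: Feq)
    hence "deriv F z = of_nat p * z ^ p' * H z + z ^ p * deriv H z" by (rule DERIV_imp_deriv)
    thus ?thesis using dHeq[OF z] p' n'
      by (simp add: D_def L_def algebra_simps)
  qed
  have c0: "c \<noteq> 0"
  proof -
    have "lam * 1 \<le> lam * real p" using lam p by (intro mult_left_mono) auto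
    hence "1 - lam + lam * real p \<noteq> 0" by linarith
    thus ?thesis unfolding c_def of_real_eq_0_iff .
  qed
  have D0: "D z \<noteq> 0" if z: "z \<in> B" for z
  proof (cases "z = 0")
    case True
    thus ?thesis using n' c0 p by (simp add: D_def H_def)
  next
    case False
    hence "F z * deriv F z \<noteq> 0" using nz z by (simp add: F_def B_def)
    hence "z * deriv F z \<noteq> 0" using False by simp
    thus ?thesis using dFeq[OF z] by auto
  qed
  define Q where "Q = (\<lambda>z. - L z / (of_nat p * D z))"
  have Lhol: "L holomorphic_on B" unfolding L_def using Khol K'hol oB by (intro holomorphic_intros)
  have Dhol: "D holomorphic_on B" unfolding D_def using Hhol Lhol oB by (intro holomorphic_intros)
  have Qhol: "Q holomorphic_on B" unfolding Q_def using Lhol Dhol D0 p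
    by (intro holomorphic_intros) auto
  have "\<forall>z\<in>B - {0}. F z / (z * deriv F z) - 1 / of_nat p = z ^ n * Q z"
  proof
    fix z assume z: "z \<in> B - {0}"
    hence zB: "z \<in> B" and z0: "z \<noteq> 0" by auto
    have "F z / (z * deriv F z) - 1 / of_nat p = z ^ p * H z / (z ^ p * D z) - 1 / of_nat p"
      using Feq[OF zB] dFeq[OF zB] by simp
    also have "\<dots> = z ^ n * Q z" unfolding Q_def
      by (rule frac_alg) (use D0[OF zB] p z0 in \<open>auto simp: D_def\<close>)
    finally show "F z / (z * deriv F z) - 1 / of_nat p = z ^ n * Q z" .
  qed
  thus ?thesis using Qhol by (auto simp: B_def F_def)
qed

lemma key_alg: fixes z0 F1 F2 F0 :: complex
  assumes "z0 \<noteq> 0" "F0 \<noteq> 0" "F1 \<noteq> 0"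
  shows "z0 * ((F1 * (z0 * F1) - F0 * (F1 + z0 * F2)) / ((z0 * F1) * (z0 * F1))) / (F0 / (z0 * F1))
     = z0 * F1 / F0 - 1 - z0 * F2 / F1"
  using assms by (simp add: field_simps power2_eq_square)
lemma zdq_alg: fixes z0 Q0 dQ :: complex
  assumes "Q0 \<noteq> 0"
  shows "z0 * (of_nat (Suc n') * z0 ^ n' * Q0 + z0 ^ (Suc n') * dQ) = z0 ^ Suc n' * Q0 * (of_nat (Suc n') + z0 * dQ / Q0)"
  using assms by (simp add: field_simps)

theorem corollary3p13:
  fixes n p :: nat and lam M :: real and f :: "complex \<Rightarrow> complex" and a :: "nat \<Rightarrow> complex"
  assumes n: "n \<ge> 1" and p: "p \<ge> 1"
    and lam: "0 \<le> lam" "lam \<le> 1"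
    and hol: "f holomorphic_on ball 0 1"
    and ser: "\<And>z. z \<in> ball 0 1 \<Longrightarrow>
               (\<lambda>k. a (k + p + n) * z ^ (k + p + n)) sums (f z - z ^ p)"
    and nz: "\<And>z. z \<in> ball 0 1 - {0} \<Longrightarrow>
               Flam lam f z * deriv (Flam lam f) z \<noteq> 0"
    and M: "M \<ge> 1 / real p"
    and cond: "\<And>z. z \<in> ball 0 1 - {0} \<Longrightarrow>
      Re (z * deriv (Flam lam f) z / Flam lam f z - 1
          - z * deriv (deriv (Flam lam f)) z / deriv (Flam lam f) z)
        < real n * M * real p / (M * real p + 1)"
  shows "\<And>z. z \<in> ball 0 1 - {0} \<Longrightarrow>
      cmod (Flam lam f z / (z * deriv (Flam lam f) z) - 1 / of_nat p) < M"
proof -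
  define B where "B = ball (0::complex) 1"
  have oB: "open B" by (simp add: B_def)
  define F where "F = Flam lam f"
  obtain Q where Qhol: "Q holomorphic_on B"
    and qeq: "\<forall>z\<in>B - {0}. F z / (z * deriv F z) - 1 / of_nat p = z ^ n * Q z"
    using factor[OF n p lam hol ser nz] by (auto simp: B_def F_def)
  define q where "q = (\<lambda>z. z ^ n * Q z)"
  have qhol: "q holomorphic_on B" unfolding q_def using Qhol oB by (intro holomorphic_intros)
  have qcont: "continuous_on B q" using qhol by (rule holomorphic_on_imp_continuous_on)
  have q0: "q 0 = 0" using n by (simp add: q_def)
  have pp: "real p > 0" using p by simp
  have Mpos: "M > 0" using M pp by (meson divide_pos_pos less_le_trans zero_less_one)
  have Mp1: "M * real p \<ge> 1" using M pp by (simp add: divide_le_eq mult.commute)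
  have fhol: "f holomorphic_on B" using hol by (simp add: B_def)
  have f'hol: "deriv f holomorphic_on B" using fhol oB by (rule holomorphic_deriv)
  have Fhol: "F holomorphic_on B" unfolding F_def Flam_def using fhol f'hol oB
    by (intro holomorphic_intros)
  have F'hol: "deriv F holomorphic_on B" using Fhol oB by (rule holomorphic_deriv)
  fix z1 :: complex assume z1: "z1 \<in> ball 0 1 - {0}"
  have z1B: "z1 \<in> B - {0}" using z1 by (simp add: B_def)
  show "cmod (Flam lam f z1 / (z1 * deriv (Flam lam f) z1) - 1 / of_nat p) < M"
  proof (rule ccontr)
    assume "\<not> ?thesis"
    hence Mz1: "M \<le> cmod (q z1)" using qeq z1B by (auto simp: q_def F_def)
    define r1 where "r1 = norm z1"
    have r1: "r1 < 1" using z1 by (simp add: r1_def)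
    have cbB: "cball 0 r1 \<subseteq> B" using r1 by (auto simp: B_def)
    define T where "T = cball 0 r1 \<inter> (\<lambda>z. cmod (q z)) -` {M..}"
    have clT: "closed T" unfolding T_def
      by (rule continuous_closed_preimage) (auto intro!: continuous_intros continuous_on_subset[OF qcont cbB])
    have Teq: "cball 0 r1 \<inter> T = T" by (auto simp: T_def)
    have cT: "compact T" using compact_Int_closed[OF compact_cball clT, of 0 r1] unfolding Teq .
    have z1T: "z1 \<in> T" using Mz1 by (simp add: T_def r1_def)
    obtain z0 where z0T: "z0 \<in> T" and zmin: "\<And>t. t \<in> T \<Longrightarrow> norm z0 \<le> norm t"
      using continuous_attains_inf[OF cT _ continuous_on_norm_id] z1T by blast
    define r0 where "r0 = norm z0"
    have r0r1: "r0 \<le> r1" using z0T by (simp add: T_def r0_def)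
    have z0ne: "z0 \<noteq> 0" using z0T q0 Mpos by (auto simp: T_def)
    have r0: "r0 > 0" using z0ne by (simp add: r0_def)
    have cb0B: "cball 0 r0 \<subseteq> B" using r0r1 cbB by auto
    have z0B: "z0 \<in> B - {0}" using cb0B z0ne by (auto simp: r0_def)
    have in1: "cmod (q z) < M" if z: "norm z < r0" for z
    proof (rule ccontr)
      assume "\<not> cmod (q z) < M"
      hence "z \<in> T" using z r0r1 by (simp add: T_def)
      from zmin[OF this] z show False by (simp add: r0_def)
    qed
    have in2: "cmod (q z) \<le> M" if z: "norm z \<le> r0" for z
    proof (rule ccontr)
      assume "\<not> cmod (q z) \<le> M"
      hence gt: "M < cmod (q z)" by simp
      have "\<not> norm z < r0" using in1[of z] gt by auto
      hence zr: "norm z = r0" using z by simp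
      have zB: "z \<in> B" using cb0B z by auto
      have "isCont q z" using qcont oB zB by (simp add: continuous_on_eq_continuous_at)
      hence "isCont (\<lambda>w. cmod (q w)) z" by (intro continuous_intros)
      hence "((\<lambda>w. cmod (q w)) \<longlongrightarrow> cmod (q z)) (at z)" by (simp add: isCont_def)
      from order_tendstoD(1)[OF this gt]
      obtain d where d: "d > 0" and dd: "\<And>w. w \<noteq> z \<Longrightarrow> dist w z < d \<Longrightarrow> M < cmod (q w)"
        unfolding eventually_at by blast
      define t where "t = min (1/2) (d / (2 * r0))"
      have t1: "t > 0" using d r0 by (simp add: t_def)
      have t2: "t \<le> 1/2" by (simp add: t_def)
      have "t \<le> d / (2 * r0)" by (simp add: t_def)
      hence "t * (2 * r0) \<le> d" using r0 by (simp add: pos_le_divide_eq)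
      hence t3: "t * r0 \<le> d / 2" by simp
      note t = t1 t2 t3
      define w where "w = of_real (1 - t) * z"
      have nw: "norm w = (1 - t) * r0"
      proof -
        have "norm w = \<bar>1 - t\<bar> * norm z" unfolding w_def norm_mult norm_of_real by (rule refl)
        thus ?thesis using t zr by simp
      qed
      have "w \<noteq> z" using t zr r0 by (auto simp: w_def)
      moreover have "dist w z < d"
      proof -
        have "w - z = - (of_real t * z)" by (simp add: w_def algebra_simps)
        hence "dist w z = t * r0" using t zr by (simp add: dist_norm norm_mult)
        thus ?thesis using t d by simp
      qed
      ultimately have "M < cmod (q w)" by (rule dd)
      moreover have "norm w < r0" using nw t r0 by (simp add: mult_less_cancel_right2)
      ultimately show False using in1 by force
    qed
    have qz0: "cmod (q z0) = M" using in2[of z0] z0T by (simp add: T_def r0_def)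
    have nq: "cmod (q z) = r0 ^ n * cmod (Q z)" if "norm z = r0" for z
      using that by (simp add: q_def norm_mult norm_power)
    have Qz0: "cmod (Q z0) = M / r0 ^ n" using nq[of z0] qz0 r0 by (simp add: r0_def field_simps)
    have Qb: "cmod (Q z) \<le> cmod (Q z0)" if z: "z \<in> cball 0 r0" for z
    proof -
      have "cmod (Q z) \<le> M / r0 ^ n"
      proof (rule maximum_modulus_frontier[of Q "cball 0 r0"])
        show "Q holomorphic_on interior (cball 0 r0)"
        proof -
          have "ball 0 r0 \<subseteq> B" using cb0B by (meson ball_subset_cball order_trans)
          thus ?thesis using holomorphic_on_subset[OF Qhol] by simp
        qed
        show "continuous_on (closure (cball 0 r0)) Q"
          using holomorphic_on_imp_continuous_on[OF holomorphic_on_subset[OF Qhol cb0B]] by simp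
        show "bounded (cball (0::complex) r0)" by simp
        show "z \<in> cball 0 r0" by (rule z)
        fix w :: complex assume "w \<in> frontier (cball 0 r0)"
        hence w: "norm w = r0" using r0 by (simp add: frontier_cball)
        have "r0 ^ n * cmod (Q w) \<le> M" using nq[OF w] in2[of w] w by simp
        thus "cmod (Q w) \<le> M / r0 ^ n" using r0 by (simp add: field_simps)
      qed
      thus ?thesis using Qz0 by simp
    qed
    have Qz0ne: "Q z0 \<noteq> 0" using Qz0 Mpos r0 by auto
    define Bq where "Bq = z0 * deriv Q z0 / Q z0"
    have bm: "Im Bq = 0 \<and> Re Bq \<ge> 0"
      unfolding Bq_def by (rule bdry_max[OF Qhol oB cb0B _ Qz0ne Qb]) (simp_all add: r0_def)
    obtain n' where n': "n = Suc n'" using n by (cases n) auto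
    have dQ: "(Q has_field_derivative deriv Q z0) (at z0)"
      using Qhol oB z0B by (simp add: holomorphic_derivI)
    have dq: "(q has_field_derivative (of_nat n * z0 ^ n' * Q z0 + z0 ^ n * deriv Q z0)) (at z0)"
      proof -
      have nm: "n - 1 = n'" "n - Suc 0 = n'" using n' by auto
      show ?thesis unfolding q_def using dQ by (auto intro!: derivative_eq_intros simp: nm algebra_simps)
    qed
    have zdq: "z0 * (of_nat n * z0 ^ n' * Q z0 + z0 ^ n * deriv Q z0) = q z0 * (of_nat n + Bq)"
      unfolding q_def Bq_def n' by (rule zdq_alg[OF Qz0ne])
    define w where "w = (\<lambda>z. F z / (z * deriv F z))"
    have Fz0: "F z0 \<noteq> 0" and F'z0: "deriv F z0 \<noteq> 0" using nz[of z0] z0B by (auto simp: B_def F_def)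
    have DF: "(F has_field_derivative deriv F z0) (at z0)"
      using Fhol oB z0B by (simp add: holomorphic_derivI)
    have DDF: "(deriv F has_field_derivative deriv (deriv F) z0) (at z0)"
      using F'hol oB z0B by (simp add: holomorphic_derivI)
    have dg: "((\<lambda>z. z * deriv F z) has_field_derivative (deriv F z0 + z0 * deriv (deriv F) z0)) (at z0)"
      using DDF by (auto intro!: derivative_eq_intros)
    define W' where "W' = (deriv F z0 * (z0 * deriv F z0) - F z0 * (deriv F z0 + z0 * deriv (deriv F) z0))
        / ((z0 * deriv F z0) * (z0 * deriv F z0))"
    have dw: "(w has_field_derivative W') (at z0)"
      unfolding w_def W'_def using DERIV_divide[OF DF dg] z0ne F'z0 by simp
    have "((\<lambda>z. w z - 1 / of_nat p) has_field_derivative W') (at z0)"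
      using dw by (auto intro!: derivative_eq_intros)
    hence "(q has_field_derivative W') (at z0)"
      by (rule has_field_derivative_transform_within_open[of _ _ _ "B - {0}"])
         (use z0B qeq oB in \<open>auto simp: w_def q_def\<close>)
    hence W'eq: "W' = of_nat n * z0 ^ n' * Q z0 + z0 ^ n * deriv Q z0"
      using dq DERIV_unique by blast
    have "w z0 - 1 / of_nat p = q z0" using qeq z0B unfolding w_def q_def by blast
    hence wz0: "w z0 = q z0 + 1 / of_nat p" by (simp add: diff_eq_eq)
    have key: "z0 * W' / w z0 = z0 * deriv F z0 / F z0 - 1 - z0 * deriv (deriv F) z0 / deriv F z0"
      unfolding W'_def w_def by (rule key_alg[OF z0ne Fz0 F'z0])
    have c0: "Re (z0 * W' / w z0) < real n * M * real p / (M * real p + 1)"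
      using cond[of z0] z0B key by (simp add: B_def F_def)
    define u where "u = of_nat p * q z0"
    have wne: "w z0 \<noteq> 0" using Fz0 F'z0 z0ne by (simp add: w_def)
    have u1: "u + 1 = of_nat p * w z0" using wz0 p by (simp add: u_def field_simps)
    have u1ne: "u + 1 \<noteq> 0" using u1 wne p by simp
    have nu: "cmod u = M * real p" using qz0 by (simp add: u_def norm_mult)
    have X: "Re (u / (u + 1)) \<ge> (M * real p) / (M * real p + 1)"
      by (rule re_frac_bound[OF nu Mp1 u1ne])
    have eqz: "z0 * W' / w z0 = (of_nat n + Bq) * (u / (u + 1))"
    proof -
      have qw: "q z0 / w z0 = u / (u + 1)" using u1 p by (simp add: u_def)
      have "z0 * W' / w z0 = q z0 * (of_nat n + Bq) / w z0" using W'eq zdq by simp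
      also have "\<dots> = (of_nat n + Bq) * (q z0 / w z0)" by simp
      also have "\<dots> = (of_nat n + Bq) * (u / (u + 1))" using qw by simp
      finally show ?thesis .
    qed
    have ReX: "Re ((of_nat n + Bq) * X) = (real n + Re Bq) * Re X" for X using bm by simp
    have "Re (z0 * W' / w z0) = (real n + Re Bq) * Re (u / (u + 1))"
      unfolding eqz by (rule ReX)
    also have "\<dots> \<ge> real n * Re (u / (u + 1))"
    proof (rule mult_right_mono)
      have "0 \<le> (M * real p) / (M * real p + 1)" using Mp1 by simp
      thus "0 \<le> Re (u / (u + 1))" using X by linarith
    qed (use bm in simp)
    finally have "Re (z0 * W' / w z0) \<ge> real n * ((M * real p) / (M * real p + 1))"
      using mult_left_mono[OF X, of "real n"] by linarith
    thus False using c0 by simp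
  qed
qed

end
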